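(* The halved Farey graph $\check F$ contains the Farey graph as a minor with finite branch sets.
   Context: Graphs are simple and may be infinite. The halved Farey graph of order $0$, $\check F_0$, is a $K^2$ whose single edge is coloured blue. Inductively, $\check F_{n+1}$ is the edge-coloured graph obtained from $\check F_n$ by adding, for every blue edge $e$ of $\check F_n$, a new vertex $v_e$ joined precisely to the two endvertices of $e$ by two blue edges, and recolouring all edges of $\check F_n\subseteq \check F_{n+1}$ black. The halved Farey graph is $\check F:=\bigcup_{n\in\mathbb{N}}\check F_n$ (forgetting colours). The Farey graph is the graph with vertex set $\mathbb{Q}\cup\{\infty\}$ in which two rationals $a/b$ and $c/d$ written in lowest terms (allowing $\infty=(\pm1)/0$) are adjacent if and only if $ad-bc=\pm1$; equivalently (up to isomorphism) it is the union $G_1\cup G_2$ of two copies $G_1,G_2$ of $\check F$ with $G_1\cap G_2=\check F_0$. A graph $H$ is a minor of $G$ if there are pairwise disjoint non-empty vertex sets $V_h\subseteq V(G)$ ($h\in V(H)$), each inducing a connected subgraph of $G$ (the branch sets), such that for every edge $hh'$ of $H$ there is an edge of $G$ between $V_h$ and $V_{h'}$. *)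

theory Defs
  imports Main "HOL.Rat"
begin

text \<open>A graph is given by a vertex set V and a symmetric adjacency relation E.\<close>

definition induces_connected :: "('a \<Rightarrow> 'a \<Rightarrow> bool) \<Rightarrow> 'a set \<Rightarrow> bool" where
  "induces_connected E S \<longleftrightarrow>
     (\<forall>x\<in>S. \<forall>y\<in>S. (\<lambda>a b. E a b \<and> a \<in> S \<and> b \<in> S)\<^sup>*\<^sup>* x y)"

definition minor_with_finite_branch_sets ::
  "'h set \<Rightarrow> ('h \<Rightarrow> 'h \<Rightarrow> bool) \<Rightarrow> 'g set \<Rightarrow> ('g \<Rightarrow> 'g \<Rightarrow> bool) \<Rightarrow> bool" where
  "minor_with_finite_branch_sets VH EH VG EG \<longleftrightarrow>
     (\<exists>B :: 'h \<Rightarrow> 'g set.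
        (\<forall>h\<in>VH. B h \<noteq> {} \<and> B h \<subseteq> VG \<and> finite (B h) \<and> induces_connected EG (B h)) \<and>
        (\<forall>h\<in>VH. \<forall>h'\<in>VH. h \<noteq> h' \<longrightarrow> B h \<inter> B h' = {}) \<and>
        (\<forall>h\<in>VH. \<forall>h'\<in>VH. EH h h' \<longrightarrow> (\<exists>x\<in>B h. \<exists>y\<in>B h'. EG x y)))"

text \<open>Vertices: the two vertices L, R of the initial K^2, and a vertex V e for every
  blue edge e ever created. Blue edges are named by bool lists: the initial blue edge is [],
  and the blue edge e (with new vertex V e) gives rise to the two blue edges
  False # e (joining the first endpoint of e to V e) and True # e (joining V e to the
  second endpoint of e). The blue edges of stage n are those named by lists of length n.\<close>

datatype hvert = L | R | V "bool list"

fun ends :: "bool list \<Rightarrow> hvert \<times> hvert" where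
  "ends [] = (L, R)"
| "ends (False # e) = (fst (ends e), V e)"
| "ends (True # e) = (V e, snd (ends e))"

definition halved_V_stage :: "nat \<Rightarrow> hvert set" where
  "halved_V_stage n = {L, R} \<union> {V e | e. length e < n}"

definition halved_E_stage :: "nat \<Rightarrow> hvert \<Rightarrow> hvert \<Rightarrow> bool" where
  "halved_E_stage n x y \<longleftrightarrow> (\<exists>e. length e \<le> n \<and> (ends e = (x, y) \<or> ends e = (y, x)))"

definition halved_V :: "hvert set" where
  "halved_V = (\<Union>n. halved_V_stage n)"

definition halved_E :: "hvert \<Rightarrow> hvert \<Rightarrow> bool" where
  "halved_E x y \<longleftrightarrow> (\<exists>n. halved_E_stage n x y)"

text \<open>Vertices: rat option, None = \<infinity> = 1/0. Lowest-terms representation.\<close>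
definition frac :: "rat option \<Rightarrow> int \<times> int" where
  "frac x = (case x of None \<Rightarrow> (1, 0) | Some q \<Rightarrow> quotient_of q)"

definition farey_E :: "rat option \<Rightarrow> rat option \<Rightarrow> bool" where
  "farey_E x y \<longleftrightarrow>
     (let (a, b) = frac x; (c, d) = frac y in a * d - b * c = 1 \<or> a * d - b * c = -1)"

end

theory Submission
  imports Defs
begin

fun pr :: "bool list \<Rightarrow> (int \<times> int) \<times> (int \<times> int)" where
  "pr [] = ((0,1),(1,0))"
| "pr (False # e) = (case pr e of ((a,b),(c,d)) \<Rightarrow> ((a,b),(a+c,b+d)))"
| "pr (True # e) = (case pr e of ((a,b),(c,d)) \<Rightarrow> ((a+c,b+d),(c,d)))"

fun gv :: "hvert \<Rightarrow> int \<times> int" where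
  "gv L = (0,1)"
| "gv R = (1,0)"
| "gv (V e) = (case pr e of ((a,b),(c,d)) \<Rightarrow> (a+c,b+d))"

lemma pr_inv: "pr e = ((a,b),(c,d)) \<Longrightarrow> a \<ge> 0 \<and> b \<ge> 0 \<and> c \<ge> 0 \<and> d \<ge> 0 \<and> c*b - a*d = 1"
proof (induction e arbitrary: a b c d)
  case Nil then show ?case by auto
next
  case (Cons x e)
  obtain a' b' c' d' where p: "pr e = ((a',b'),(c',d'))" by (metis prod.exhaust)
  from Cons.IH[OF p] have "a' \<ge> 0 \<and> b' \<ge> 0 \<and> c' \<ge> 0 \<and> d' \<ge> 0 \<and> c'*b' - a'*d' = 1" .
  then show ?case using Cons.prems p by (cases x) (auto simp: algebra_simps)
qed

lemma gv_ends: "gv (fst (ends e)) = fst (pr e) \<and> gv (snd (ends e)) = snd (pr e)"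
proof (induction e)
  case Nil then show ?case by simp
next
  case (Cons x e)
  obtain a' b' c' d' where p: "pr e = ((a',b'),(c',d'))" by (metis prod.exhaust)
  show ?case using Cons p by (cases x) auto
qed

lemma pr_inj: "pr e = pr e' \<Longrightarrow> e = e'"
proof (induction e arbitrary: e')
  case Nil
  show ?case
  proof (cases e')
    case (Cons x f)
    obtain a' b' c' d' where p: "pr f = ((a',b'),(c',d'))" by (metis prod.exhaust)
    have "a' \<ge> 0 \<and> b' \<ge> 0 \<and> c' \<ge> 0 \<and> d' \<ge> 0 \<and> c'*b' - a'*d' = 1" using pr_inv[OF p] .
    then show ?thesis using Nil Cons p by (cases x) auto
  qed simp
next
  case (Cons x e)
  obtain a b c d where p: "pr e = ((a,b),(c,d))" by (metis prod.exhaust)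
  have i: "a \<ge> 0 \<and> b \<ge> 0 \<and> c \<ge> 0 \<and> d \<ge> 0 \<and> c*b - a*d = 1" using pr_inv[OF p] .
  show ?case
  proof (cases e')
    case Nil
    then show ?thesis using Cons.prems i p by (cases x) auto
  next
    case (Cons y f)
    obtain a' b' c' d' where p': "pr f = ((a',b'),(c',d'))" by (metis prod.exhaust)
    have i': "a' \<ge> 0 \<and> b' \<ge> 0 \<and> c' \<ge> 0 \<and> d' \<ge> 0 \<and> c'*b' - a'*d' = 1" using pr_inv[OF p'] .
    have "x = y"
    proof (rule ccontr)
      assume "x \<noteq> y"
      then show False using Cons.prems Cons p p' i i' by (cases x; cases y) (auto simp: add_nonneg_eq_0_iff)
    qed
    then have "pr e = pr f" using Cons.prems Cons p p' by (cases x) auto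
    then show ?thesis using Cons.IH \<open>x = y\<close> Cons by auto
  qed
qed

lemma key_arith:
  fixes a b c d :: int
  assumes "a \<ge> 0" "b \<ge> 0" "c \<ge> 0" "d \<ge> 0" "c*b - a*d = 1"
    "\<not> (a \<le> c \<and> b \<le> d)" "\<not> (c \<le> a \<and> d \<le> b)"
  shows "a = 0 \<and> b = 1 \<and> c = 1 \<and> d = 0"
proof -
  consider "c < a \<and> b < d" | "a < c \<and> d < b" using assms by linarith
  then show ?thesis
  proof cases
    case 1
    have "c*b \<le> a*b" using 1 assms by (intro mult_right_mono) auto
    moreover have "a*b \<le> a*d" using 1 assms by (intro mult_left_mono) auto
    ultimately show ?thesis using assms by linarith
  next
    case 2
    have "c*(d+1) \<le> c*b" using 2 assms by (intro mult_left_mono) auto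
    moreover have "a*d \<le> c*d" using 2 assms by (intro mult_right_mono) auto
    ultimately have "c \<le> 1" using assms by (simp add: algebra_simps)
    then have c1: "c = 1" and a0: "a = 0" using 2 assms by auto
    have b1: "b = 1" using assms(5) unfolding c1 a0 by simp
    show ?thesis using c1 a0 b1 2 assms(4) by simp
  qed
qed

lemma pr_ex: "a \<ge> 0 \<Longrightarrow> b \<ge> 0 \<Longrightarrow> c \<ge> 0 \<Longrightarrow> d \<ge> 0 \<Longrightarrow> c*b - a*d = 1 \<Longrightarrow> \<exists>e. pr e = ((a,b),(c,d))"
proof (induction "nat (a+b+c+d)" arbitrary: a b c d rule: less_induct)
  case less
  show ?case
  proof (cases "a \<le> c \<and> b \<le> d")
    case True
    have nz: "a + b > 0" using less.prems by (smt (verit) mult_eq_0_iff)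
    have "\<exists>e. pr e = ((a,b),(c-a,d-b))"
      by (rule less.hyps) (use less.prems True nz in \<open>auto simp: algebra_simps\<close>)
    then obtain e where "pr e = ((a,b),(c-a,d-b))" by blast
    then have "pr (False # e) = ((a,b),(c,d))" by simp
    then show ?thesis by blast
  next
    case F1: False
    show ?thesis
    proof (cases "c \<le> a \<and> d \<le> b")
      case True
      have nz: "c + d > 0" using less.prems by (smt (verit) mult_eq_0_iff)
      have "\<exists>e. pr e = ((a-c,b-d),(c,d))"
        by (rule less.hyps) (use less.prems True nz in \<open>auto simp: algebra_simps\<close>)
      then obtain e where "pr e = ((a-c,b-d),(c,d))" by blast
      then have "pr (True # e) = ((a,b),(c,d))" by simp
      then show ?thesis by blast
    next
      case False
      then have "a = 0 \<and> b = 1 \<and> c = 1 \<and> d = 0" using F1 less.prems key_arith by blast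
      then have "pr [] = ((a,b),(c,d))" by simp
      then show ?thesis by blast
    qed
  qed
qed

lemma uniq_arith:
  fixes p q a b a' b' :: int
  assumes e1: "p*b - a*q = 1" and e2: "p*b' - a'*q = 1"
    and "0 \<le> b" "b \<le> q" "0 \<le> b'" "b' \<le> q" "0 \<le> a" "0 \<le> a'" "q > 0"
  shows "a = a' \<and> b = b'"
proof -
  have id: "b' * (p*b - a*q) - b*(p*b' - a'*q) = q*(a'*b - a*b')" by (simp add: algebra_simps)
  define k where "k = a*b' - a'*b"
  have bk: "b - b' = q * k" using id[unfolded e1 e2] unfolding k_def by (simp add: algebra_simps)
  have "k = 0"
  proof (rule ccontr)
    assume "k \<noteq> 0"
    then consider "k \<ge> 1" | "k \<le> -1" by linarith
    then show False
    proof cases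
      case 1
      have "q * 1 \<le> q * k" using 1 assms by (intro mult_left_mono) auto
      then have "b = q" "b' = 0" using bk assms by linarith+
      then have "- a'*q = 1" using e2 by simp
      moreover have "a'*q \<ge> 0" using assms by simp
      ultimately show False by linarith
    next
      case 2
      have "q * k \<le> q * (-1)" using 2 assms by (intro mult_left_mono) auto
      then have "b' = q" "b = 0" using bk assms by linarith+
      then have "- a*q = 1" using e1 by simp
      moreover have "a*q \<ge> 0" using assms by simp
      ultimately show False by linarith
    qed
  qed
  then have bb: "b = b'" using bk by simp
  then have "a*q = a'*q" using e1 e2 by (metis add_diff_cancel_left' diff_add_cancel)
  then have "a = a'" using assms by simp
  then show ?thesis using bb by simp
qed

lemma gv_V_pos: "gv (V e) = (p,q) \<Longrightarrow> p > 0 \<and> q > 0"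
proof -
  assume h: "gv (V e) = (p,q)"
  obtain a b c d where pe: "pr e = ((a,b),(c,d))" by (metis prod.exhaust)
  have i: "a \<ge> 0 \<and> b \<ge> 0 \<and> c \<ge> 0 \<and> d \<ge> 0 \<and> c*b - a*d = 1" using pr_inv[OF pe] .
  have pq: "p = a + c" "q = b + d" using h pe by auto
  have "p \<noteq> 0" using i unfolding pq by (auto simp: add_nonneg_eq_0_iff)
  moreover have "q \<noteq> 0" using i unfolding pq by (auto simp: add_nonneg_eq_0_iff)
  ultimately show ?thesis using i pq by auto
qed

lemma gv_inj: "inj gv"
proof (rule injI)
  fix v v' assume h: "gv v = gv v'"
  have nL: "gv (V e) \<noteq> (0,1)" for e using gv_V_pos[of e] by (metis less_irrefl)
  have nR: "gv (V e) \<noteq> (1,0)" for e using gv_V_pos[of e] by (metis less_irrefl)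
  show "v = v'"
  proof (cases v)
    case L then show ?thesis using h nL by (cases v') (use nL in \<open>simp_all, metis\<close>)
  next
    case R then show ?thesis using h nR by (cases v') (use nR in \<open>simp_all, metis\<close>)
  next
    case (V e)
    show ?thesis
    proof (cases v')
      case L then show ?thesis using h nL V by (metis gv.simps(1))
    next
      case R then show ?thesis using h nR V by (metis gv.simps(2))
    next
      case (V e')
      obtain a b c d where pe: "pr e = ((a,b),(c,d))" by (metis prod.exhaust)
      have i: "a \<ge> 0 \<and> b \<ge> 0 \<and> c \<ge> 0 \<and> d \<ge> 0 \<and> c*b - a*d = 1" using pr_inv[OF pe] .
      obtain a' b' c' d' where pe': "pr e' = ((a',b'),(c',d'))" by (metis prod.exhaust)
      have i': "a' \<ge> 0 \<and> b' \<ge> 0 \<and> c' \<ge> 0 \<and> d' \<ge> 0 \<and> c'*b' - a'*d' = 1" using pr_inv[OF pe'] .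
      have s1: "a + c = a' + c'" and s2: "b + d = b' + d'" using h pe pe' \<open>v = V e\<close> V by auto
      have qpos: "b + d > 0" using gv_V_pos[of e "a+c" "b+d"] pe by simp
      have "a = a' \<and> b = b'"
      proof (rule uniq_arith[where p = "a+c" and q = "b+d"])
        show "(a + c) * b - a * (b + d) = 1" using i by (simp add: algebra_simps)
        show "(a + c) * b' - a' * (b + d) = 1" using i' s1 s2 by (simp add: algebra_simps)
      qed (use i i' s2 qpos in auto)
      then have "pr e = pr e'" using pe pe' s1 s2 by auto
      then show ?thesis using pr_inj \<open>v = V e\<close> V by simp
    qed
  qed
qed

definition vert :: "int \<times> int \<Rightarrow> hvert" where "vert = inv gv"

lemma vert_gv[simp]: "vert (gv v) = v"
  unfolding vert_def by (simp add: gv_inj)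

lemma halved_E_iff: "halved_E x y \<longleftrightarrow> (\<exists>e. ends e = (x,y) \<or> ends e = (y,x))"
  unfolding halved_E_def halved_E_stage_def by blast

lemma halved_V_UNIV: "halved_V = UNIV"
proof -
  have "v \<in> halved_V" for v
  proof (cases v)
    case (V e)
    then have "v \<in> halved_V_stage (Suc (length e))" unfolding halved_V_stage_def by auto
    then show ?thesis unfolding halved_V_def by blast
  qed (auto simp: halved_V_def halved_V_stage_def)
  then show ?thesis by blast
qed

lemma edge_lemma:
  assumes "a \<ge> 0" "b \<ge> 0" "c \<ge> 0" "d \<ge> 0" "c*b - a*d = 1"
  shows "halved_E (vert (a,b)) (vert (c,d))"
proof -
  obtain e where pe: "pr e = ((a,b),(c,d))" using pr_ex assms by blast
  have "gv (fst (ends e)) = (a,b)" "gv (snd (ends e)) = (c,d)" using gv_ends[of e] pe by auto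
  then have "vert (a,b) = fst (ends e)" "vert (c,d) = snd (ends e)" by (metis vert_gv)+
  then show ?thesis unfolding halved_E_iff by (metis prod.collapse)
qed

lemma edge_lemma2:
  assumes "a \<ge> 0" "b \<ge> 0" "c \<ge> 0" "d \<ge> 0" "c*b - a*d = 1 \<or> a*d - c*b = 1"
  shows "halved_E (vert (a,b)) (vert (c,d))"
proof (cases "c*b - a*d = 1")
  case True then show ?thesis using edge_lemma assms by blast
next
  case False
  then have "halved_E (vert (c,d)) (vert (a,b))" using edge_lemma[of c d a b] assms by blast
  then show ?thesis unfolding halved_E_iff by blast
qed

lemma vert_ex:
  fixes p q x y :: int
  assumes "p \<ge> 0" "q \<ge> 0" "x*p + y*q = 1"
  shows "\<exists>v. gv v = (p,q)"
proof (cases "p = 0")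
  case True
  then have "y*q = 1" using assms by simp
  then have "q = 1" using assms(2) using zmult_eq_1_iff by auto
  then show ?thesis using True by (metis gv.simps(1))
next
  case pn: False
  show ?thesis
  proof (cases "q = 0")
    case True
    then have "x*p = 1" using assms by simp
    then have "p = 1" using assms(1) using zmult_eq_1_iff by auto
    then show ?thesis using True by (metis gv.simps(2))
  next
    case False
    define k where "k = \<bar>x\<bar> + \<bar>y\<bar>"
    have p1: "p \<ge> 1" "q \<ge> 1" using pn False assms by auto
    have "k * 1 \<le> k * p" "k * 1 \<le> k * q" using p1 unfolding k_def by (intro mult_left_mono; simp)+
    then have r0: "y + k*p \<ge> 0" and s0: "-x + k*q \<ge> 0"
      using k_def abs_ge_zero[of x] abs_ge_zero[of y] abs_ge_minus_self[of y] abs_ge_self[of x] by linarith+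
    have det: "(y + k*p)*q - p*(-x + k*q) = 1" using assms(3) by (simp add: algebra_simps)
    obtain e where "pr e = ((p,q),(y + k*p, -x + k*q))" using pr_ex[OF assms(1,2) r0 s0 det] by blast
    then have "gv (fst (ends e)) = (p,q)" using gv_ends[of e] by simp
    then show ?thesis by blast
  qed
qed

lemma gv_vert: "\<exists>v. gv v = m \<Longrightarrow> gv (vert m) = m"
  by (metis vert_gv)

lemma halved_E_sym: "halved_E x y \<Longrightarrow> halved_E y x"
  unfolding halved_E_iff by blast

definition fv :: "rat \<Rightarrow> int \<times> int" where
  "fv r = (case quotient_of r of (a,b) \<Rightarrow> if a \<ge> 0 then (a+b, b) else (b, b-a))"

lemma fv_props: "fst (fv r) > 0 \<and> snd (fv r) > 0 \<and> gv (vert (fv r)) = fv r"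
proof -
  obtain a b where q: "quotient_of r = (a,b)" by (metis prod.exhaust)
  have b0: "b > 0" using quotient_of_denom_pos[OF q] .
  have "coprime a b" using quotient_of_coprime[OF q] .
  then have "gcd a b = 1" by (simp add: coprime_iff_gcd_eq_1)
  then obtain u v where uv: "u*a + v*b = 1" using bezout_int[of a b] by auto
  show ?thesis
  proof (cases "a \<ge> 0")
    case True
    then have f: "fv r = (a+b, b)" unfolding fv_def q by simp
    have "u*(a+b) + (v-u)*b = 1" using uv by (simp add: algebra_simps)
    then have "\<exists>v. gv v = (a+b,b)" using vert_ex[of "a+b" b u "v-u"] True b0 by auto
    then show ?thesis using f True b0 gv_vert by auto
  next
    case False
    then have f: "fv r = (b, b-a)" unfolding fv_def q by simp
    have "(u+v)*b + (-u)*(b-a) = 1" using uv by (simp add: algebra_simps)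
    then have "\<exists>v. gv v = (b,b-a)" using vert_ex[of b "b-a" "u+v" "-u"] False b0 by auto
    then show ?thesis using f False b0 gv_vert by auto
  qed
qed

lemma fv_inj: "fv r = fv s \<Longrightarrow> r = s"
proof -
  assume h: "fv r = fv s"
  obtain a b where q: "quotient_of r = (a,b)" by (metis prod.exhaust)
  obtain c d where q': "quotient_of s = (c,d)" by (metis prod.exhaust)
  have "(a,b) = (c,d)"
    using h q q' quotient_of_denom_pos[OF q] quotient_of_denom_pos[OF q'] unfolding fv_def
    by (auto split: if_splits)
  then show ?thesis using q q' quotient_of_div by (metis Pair_inject)
qed

lemma vert_fv_neq: "vert (fv r) \<noteq> L" "vert (fv r) \<noteq> R"
  using fv_props[of r] by (metis fst_conv gv.simps(1) less_irrefl, metis snd_conv gv.simps(2) less_irrefl)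

lemma some_some:
  assumes q: "quotient_of r = (a,b)" and q': "quotient_of s = (c,d)"
    and h: "a*d - b*c = 1 \<or> a*d - b*c = -1"
  shows "halved_E (vert (fv r)) (vert (fv s))"
proof -
  have b0: "b > 0" using quotient_of_denom_pos[OF q] .
  have d0: "d > 0" using quotient_of_denom_pos[OF q'] .
  consider "a \<ge> 0" "c \<ge> 0" | "a < 0" "c < 0" | "a \<ge> 0" "c < 0" | "a < 0" "c \<ge> 0" by linarith
  then show ?thesis
  proof cases
    case 1
    then have f: "fv r = (a+b,b)" "fv s = (c+d,d)" unfolding fv_def q q' by auto
    show ?thesis unfolding f
      by (rule edge_lemma2) (use 1 b0 d0 h in \<open>auto simp: algebra_simps\<close>)
  next
    case 2
    then have f: "fv r = (b,b-a)" "fv s = (d,d-c)" unfolding fv_def q q' by auto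
    show ?thesis unfolding f
      by (rule edge_lemma2) (use 2 b0 d0 h in \<open>auto simp: algebra_simps\<close>)
  next
    case 3
    then have f: "fv r = (a+b,b)" "fv s = (d,d-c)" unfolding fv_def q q' by auto
    have "b*c \<le> -b" using mult_left_mono[of c "-1" b] 3 b0 by simp
    moreover have "a*d \<ge> 0" using 3 d0 by simp
    ultimately have "a*d = 0" "b*c = -1" using h b0 by linarith+
    then have "a = 0" using d0 by simp
    show ?thesis unfolding f
      by (rule edge_lemma2) (use 3 b0 d0 \<open>a = 0\<close> \<open>b*c = -1\<close> in \<open>auto simp: algebra_simps\<close>)
  next
    case 4
    then have f: "fv r = (b,b-a)" "fv s = (c+d,d)" unfolding fv_def q q' by auto
    have "a*d \<le> -d" using mult_right_mono[of a "-1" d] 4 d0 by simp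
    moreover have "b*c \<ge> 0" using 4 b0 by simp
    ultimately have "b*c = 0" "a*d = -1" using h d0 by linarith+
    then have "c = 0" using b0 by simp
    show ?thesis unfolding f
      by (rule edge_lemma2) (use 4 b0 d0 \<open>c = 0\<close> \<open>a*d = -1\<close> in \<open>auto simp: algebra_simps\<close>)
  qed
qed

lemma none_some:
  assumes q': "quotient_of s = (c,d)" and h: "d = 1 \<or> d = -1"
  shows "\<exists>u\<in>{L,R}. halved_E u (vert (fv s))"
proof -
  have d1: "d = 1" using h quotient_of_denom_pos[OF q'] by auto
  show ?thesis
  proof (cases "c \<ge> 0")
    case True
    then have f: "fv s = (c+1,1)" unfolding fv_def q' d1 by simp
    have "halved_E (vert (c+1,1)) (vert (1,0))" by (rule edge_lemma2) (use True in auto)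
    moreover have "vert (1,0) = R" by (metis vert_gv gv.simps(2))
    ultimately show ?thesis using f halved_E_sym by auto
  next
    case False
    then have f: "fv s = (1,1-c)" unfolding fv_def q' d1 by simp
    have "halved_E (vert (0,1)) (vert (1,1-c))" by (rule edge_lemma2) (use False in auto)
    moreover have "vert (0,1) = L" by (metis vert_gv gv.simps(1))
    ultimately show ?thesis using f by auto
  qed
qed

definition BS :: "rat option \<Rightarrow> hvert set" where
  "BS x = (case x of None \<Rightarrow> {L,R} | Some r \<Rightarrow> {vert (fv r)})"

lemma edge_main: assumes "farey_E x y" shows "\<exists>u\<in>BS x. \<exists>w\<in>BS y. halved_E u w"
proof (cases x)
  case None
  show ?thesis
  proof (cases y)
    case None
    then show ?thesis using \<open>farey_E x y\<close> \<open>x = None\<close> by (simp add: farey_E_def frac_def)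
  next
    case (Some s)
    obtain c d where q': "quotient_of s = (c,d)" by (metis prod.exhaust)
    have "d = 1 \<or> d = -1" using \<open>farey_E x y\<close> None Some q' by (simp add: farey_E_def frac_def)
    then show ?thesis using none_some[OF q'] None Some by (simp add: BS_def)
  qed
next
  case (Some r)
  obtain a b where q: "quotient_of r = (a,b)" by (metis prod.exhaust)
  show ?thesis
  proof (cases y)
    case None
    have "b = 1 \<or> b = -1" using \<open>farey_E x y\<close> None Some q by (auto simp add: farey_E_def frac_def)
    then show ?thesis using none_some[OF q] None Some halved_E_sym by (auto simp add: BS_def)
  next
    case (Some s)
    obtain c d where q': "quotient_of s = (c,d)" by (metis prod.exhaust)
    have "a*d - b*c = 1 \<or> a*d - b*c = -1" using \<open>farey_E x y\<close> \<open>x = Some r\<close> Some q q'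
      by (simp add: farey_E_def frac_def)
    then show ?thesis using some_some[OF q q'] \<open>x = Some r\<close> Some by (simp add: BS_def)
  qed
qed

theorem lemma2p1:
  shows "minor_with_finite_branch_sets (UNIV :: rat option set) farey_E halved_V halved_E"
  unfolding minor_with_finite_branch_sets_def
proof (intro exI[of _ BS] conjI ballI impI)
  fix h :: "rat option"
  show "BS h \<noteq> {}" "BS h \<subseteq> halved_V" "finite (BS h)"
    by (auto simp: BS_def halved_V_UNIV split: option.splits)
  have LR: "halved_E L R" unfolding halved_E_iff by (metis ends.simps(1))
  show "induces_connected halved_E (BS h)"
    unfolding induces_connected_def
  proof (intro ballI)
    fix u w assume u: "u \<in> BS h" and w: "w \<in> BS h"
    let ?r = "\<lambda>a b. halved_E a b \<and> a \<in> BS h \<and> b \<in> BS h"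
    show "?r\<^sup>*\<^sup>* u w"
    proof (cases "u = w")
      case True then show ?thesis by simp
    next
      case False
      then have "h = None" using u w by (auto simp: BS_def split: option.splits)
      then have "?r u w" using u w False LR halved_E_sym by (auto simp: BS_def)
      then show ?thesis by blast
    qed
  qed
next
  fix h h' :: "rat option" assume "h \<noteq> h'"
  show "BS h \<inter> BS h' = {}"
  proof (cases h; cases h')
    fix r s assume "h = Some r" "h' = Some s"
    then have "r \<noteq> s" using \<open>h \<noteq> h'\<close> by simp
    then have "vert (fv r) \<noteq> vert (fv s)" using fv_inj fv_props by metis
    then show ?thesis using \<open>h = Some r\<close> \<open>h' = Some s\<close> by (simp add: BS_def)
  qed (use \<open>h \<noteq> h'\<close> vert_fv_neq in \<open>auto simp: BS_def\<close>)
next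
  fix h h' :: "rat option" assume "farey_E h h'"
  then show "\<exists>x\<in>BS h. \<exists>y\<in>BS h'. halved_E x y" using edge_main by blast
qed

end
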